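(* For every integer $n\ge 10$ there exists a simple undirected graph $G$ on $n$ vertices whose interlace polynomial $q(G)$ has a non-unimodal coefficient sequence. In particular, there is a graph on 10 vertices with $q(G)=2x+7x^2+6x^3+7x^4+4x^5+3x^6+2x^7+x^8$.
   Context: All graphs are finite, simple and undirected. For a vertex $u$, $G\setminus u$ denotes $G$ with $u$ and all its incident edges removed. For a vertex $v$ with neighbourhood $N_v$, local complementation $G*v$ replaces the induced subgraph of $G$ on $N_v$ by its complement. For an edge $\{u,v\}$, edge local complementation is $G^{(uv)}=G*u*v*u$. The interlace polynomial $q(G)=q(G,x)$ is defined recursively: for the edgeless graph $E_n$ on $n$ vertices, $q(E_n)=x^n$; for any other graph $G$, choose any edge $\{u,v\}$ and set $q(G)=q(G\setminus u)+q(G^{(uv)}\setminus u)$ (independent of the choice of edge). The coefficient sequence $(a_1,\dots,a_d)$ of $q(G)=\sum_{i=1}^d a_ix^i$ is unimodal if there is $k$ with $a_1\le\cdots\le a_k$ and $a_k\ge\cdots\ge a_d$. *)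

theory Defs
  imports "HOL-Computational_Algebra.Polynomial"
begin

text \<open>A finite simple undirected graph with vertices in nat: a vertex set V and a set E
of edges, each edge being a 2-element subset of V.\<close>

type_synonym graph = "nat set \<times> nat set set"

definition simple_graph :: "graph \<Rightarrow> bool" where
  "simple_graph G \<longleftrightarrow> finite (fst G) \<and> (\<forall>e\<in>snd G. e \<subseteq> fst G \<and> card e = 2)"

definition nbhd :: "graph \<Rightarrow> nat \<Rightarrow> nat set" where
  "nbhd G v = {w. {v, w} \<in> snd G}"

definition del_vertex :: "graph \<Rightarrow> nat \<Rightarrow> graph" where
  "del_vertex G u = (fst G - {u}, {e \<in> snd G. u \<notin> e})"

definition local_comp :: "graph \<Rightarrow> nat \<Rightarrow> graph" where
  "local_comp G v =
     (let P = {{a, b} | a b. a \<in> nbhd G v \<and> b \<in> nbhd G v \<and> a \<noteq> b}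
      in (fst G, (snd G - P) \<union> (P - snd G)))"

definition edge_local_comp :: "graph \<Rightarrow> nat \<Rightarrow> nat \<Rightarrow> graph" where
  "edge_local_comp G u v = local_comp (local_comp (local_comp G u) v) u"

text \<open>A canonical edge choice {u,v}: u the least vertex incident to an edge, v its least
neighbour. (The recursion is independent of the choice of edge.)\<close>
definition edge_u :: "graph \<Rightarrow> nat" where
  "edge_u G = Min {a. \<exists>b. {a, b} \<in> snd G \<and> a \<noteq> b}"

definition edge_v :: "graph \<Rightarrow> nat" where
  "edge_v G = Min {b. {edge_u G, b} \<in> snd G \<and> b \<noteq> edge_u G}"

text \<open>Recursion with fuel (the number of vertices decreases by one in each step).\<close>
fun interlace_aux :: "nat \<Rightarrow> graph \<Rightarrow> int poly" where
  "interlace_aux 0 G = monom 1 (card (fst G))"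
| "interlace_aux (Suc k) G =
     (if snd G = {} then monom 1 (card (fst G))
      else interlace_aux k (del_vertex G (edge_u G))
         + interlace_aux k (del_vertex (edge_local_comp G (edge_u G) (edge_v G)) (edge_u G)))"

definition interlace_poly :: "graph \<Rightarrow> int poly" where
  "interlace_poly G = interlace_aux (card (fst G)) G"

definition unimodal_coeffs :: "int poly \<Rightarrow> bool" where
  "unimodal_coeffs p \<longleftrightarrow>
     (\<exists>k. (\<forall>i j. 1 \<le> i \<and> i \<le> j \<and> j \<le> k \<longrightarrow> coeff p i \<le> coeff p j) \<and>
          (\<forall>i j. k \<le> i \<and> i \<le> j \<and> j \<le> degree p \<longrightarrow> coeff p i \<ge> coeff p j))"

end

theory Submission
  imports Defs
begin

definition nbhdC :: "graph \<Rightarrow> nat \<Rightarrow> nat set" where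
  "nbhdC G v = Set.filter (\<lambda>w. {v, w} \<in> snd G) (fst G)"
definition lcC :: "graph \<Rightarrow> nat \<Rightarrow> graph" where
  "lcC G v = (let N = nbhdC G v;
      P = (\<lambda>(a,b). {a,b}) ` Set.filter (\<lambda>(a,b). a \<noteq> b) (N \<times> N)
     in (fst G, (snd G - P) \<union> (P - snd G)))"
definition edge_uC :: "graph \<Rightarrow> nat" where
  "edge_uC G = Min (Set.filter (\<lambda>a. \<exists>b\<in>fst G. {a,b} \<in> snd G \<and> a \<noteq> b) (fst G))"
definition edge_vC :: "graph \<Rightarrow> nat" where
  "edge_vC G = Min (Set.filter (\<lambda>b. {edge_uC G, b} \<in> snd G \<and> b \<noteq> edge_uC G) (fst G))"
fun icC :: "nat \<Rightarrow> graph \<Rightarrow> int poly" where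
  "icC 0 G = monom 1 (card (fst G))"
| "icC (Suc k) G =
     (if snd G = {} then monom 1 (card (fst G))
      else icC k (del_vertex G (edge_uC G))
         + icC k (del_vertex (lcC (lcC (lcC G (edge_uC G)) (edge_vC G)) (edge_uC G)) (edge_uC G)))"

lemma simple_edge_in:
  assumes "simple_graph G" "{a,b} \<in> snd G" shows "a \<in> fst G" "b \<in> fst G"
  using assms unfolding simple_graph_def by auto

lemma nbhdC_eq: assumes s: "simple_graph G" shows "nbhdC G v = nbhd G v"
  unfolding nbhdC_def nbhd_def using simple_edge_in[OF s] by auto

lemma P_eq: "(\<lambda>(a,b). {a,b}) ` Set.filter (\<lambda>(a,b). a \<noteq> b) (N \<times> N) = {{a, b} | a b. a \<in> N \<and> b \<in> N \<and> a \<noteq> b}"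
  by (auto simp: image_iff)

lemma lcC_eq: "simple_graph G \<Longrightarrow> lcC G v = local_comp G v"
  unfolding lcC_def local_comp_def nbhdC_eq Let_def P_eq by simp

lemma edge_uC_eq: assumes s: "simple_graph G" shows "edge_uC G = edge_u G"
  unfolding edge_uC_def edge_u_def
  by (rule arg_cong[where f=Min]) (use simple_edge_in[OF s] in auto)

lemma edge_vC_eq: assumes s: "simple_graph G" shows "edge_vC G = edge_v G"
  unfolding edge_vC_def edge_v_def edge_uC_eq[OF s]
  by (rule arg_cong[where f=Min]) (use simple_edge_in[OF s] in auto)

lemma simple_del: "simple_graph G \<Longrightarrow> simple_graph (del_vertex G u)"
  unfolding simple_graph_def del_vertex_def by auto

lemma local_comp_fst: "fst (local_comp G v) = fst G"
  unfolding local_comp_def Let_def by simp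

lemma simple_lc: assumes "simple_graph G" shows "simple_graph (local_comp G v)"
proof -
  have "\<And>e. e \<in> snd (local_comp G v) \<Longrightarrow> e \<subseteq> fst G \<and> card e = 2"
  proof -
    fix e assume "e \<in> snd (local_comp G v)"
    then have "e \<in> snd G \<or> (\<exists>a b. e = {a,b} \<and> a \<in> nbhd G v \<and> b \<in> nbhd G v \<and> a \<noteq> b)"
      unfolding local_comp_def Let_def by auto
    then show "e \<subseteq> fst G \<and> card e = 2"
    proof
      assume "e \<in> snd G" then show ?thesis using assms unfolding simple_graph_def by auto
    next
      assume "\<exists>a b. e = {a,b} \<and> a \<in> nbhd G v \<and> b \<in> nbhd G v \<and> a \<noteq> b"
      then obtain a b where "e = {a,b}" "{v,a} \<in> snd G" "{v,b} \<in> snd G" "a \<noteq> b"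
        unfolding nbhd_def by auto
      then show ?thesis using simple_edge_in[OF assms] by auto
    qed
  qed
  then show ?thesis using assms unfolding simple_graph_def local_comp_fst by auto
qed

lemma simple_elc: "simple_graph G \<Longrightarrow> simple_graph (edge_local_comp G u v)"
  unfolding edge_local_comp_def by (intro simple_lc)

lemma elc_fst: "fst (edge_local_comp G u v) = fst G"
  unfolding edge_local_comp_def local_comp_fst ..

lemma icC_eq: "simple_graph G \<Longrightarrow> icC k G = interlace_aux k G"
proof (induction k arbitrary: G)
  case 0 then show ?case by simp
next
  case (Suc k)
  have e: "lcC (lcC (lcC G (edge_u G)) (edge_vC G)) (edge_u G) = edge_local_comp G (edge_u G) (edge_v G)"
    using Suc.prems by (simp add: edge_uC_eq edge_vC_eq lcC_eq simple_lc edge_local_comp_def)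
  show ?case using Suc by (simp add: e edge_uC_eq simple_del simple_elc)
qed

lemma edge_u_mem: assumes "simple_graph G" "snd G \<noteq> {}" shows "edge_u G \<in> fst G"
proof -
  let ?S = "{a. \<exists>b. {a, b} \<in> snd G \<and> a \<noteq> b}"
  have sub: "?S \<subseteq> fst G" using simple_edge_in[OF assms(1)] by auto
  obtain e where "e \<in> snd G" using assms(2) by auto
  then obtain a b where "{a,b} \<in> snd G" "a \<noteq> b" using assms(1) unfolding simple_graph_def
    by (metis card_2_iff)
  then have "?S \<noteq> {}" by auto
  moreover have "finite ?S" using sub assms(1) unfolding simple_graph_def by (auto intro: finite_subset)
  ultimately have "Min ?S \<in> ?S" by (rule Min_in[rotated])
  then show ?thesis unfolding edge_u_def using sub by auto
qed

lemma fuel: "simple_graph G \<Longrightarrow> card (fst G) \<le> k \<Longrightarrow> interlace_aux k G = interlace_aux (card (fst G)) G"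
proof (induction k arbitrary: G)
  case 0 then show ?case by simp
next
  case (Suc k)
  show ?case
  proof (cases "card (fst G)")
    case 0
    then have "fst G = {}" using Suc.prems unfolding simple_graph_def by auto
    then have "snd G = {}" using Suc.prems unfolding simple_graph_def by fastforce
    then show ?thesis using 0 by simp
  next
    case (Suc c)
    show ?thesis
    proof (cases "snd G = {}")
      case True then show ?thesis using Suc by simp
    next
      case False
      let ?u = "edge_u G"
      have um: "?u \<in> fst G" using edge_u_mem[OF Suc.prems(1) False] .
      have fin: "finite (fst G)" using Suc.prems unfolding simple_graph_def by auto
      have c1: "card (fst (del_vertex G ?u)) = c" using um fin Suc unfolding del_vertex_def by simp
      have c2: "card (fst (del_vertex (edge_local_comp G ?u (edge_v G)) ?u)) = c"
        using um fin Suc unfolding del_vertex_def elc_fst by simp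
      have s1: "simple_graph (del_vertex G ?u)" by (rule simple_del[OF Suc.prems(1)])
      have s2: "simple_graph (del_vertex (edge_local_comp G ?u (edge_v G)) ?u)"
        by (rule simple_del[OF simple_elc[OF Suc.prems(1)]])
      have "c \<le> k" using Suc.prems(2) \<open>card (fst G) = Suc c\<close> by simp
      then show ?thesis using Suc.IH[OF s1] Suc.IH[OF s2] c1 c2 False \<open>card (fst G) = Suc c\<close>
        by simp
    qed
  qed
qed

lemma lc_snd: "local_comp (A, E) v = (A, snd (local_comp (B, E) v))"
  unfolding local_comp_def nbhd_def Let_def by simp

lemma elc_snd: "edge_local_comp (A, E) u v = (A, snd (edge_local_comp (B, E) u v))"
  unfolding edge_local_comp_def
  by (metis lc_snd prod.collapse)

lemma isolated:
  assumes "simple_graph (V, E)" "finite I" "V \<inter> I = {}"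
  shows "interlace_aux k (V \<union> I, E) = monom 1 (card I) * interlace_aux k (V, E)"
  using assms
proof (induction k arbitrary: V E)
  case 0
  have "finite V" using 0 unfolding simple_graph_def by auto
  then show ?case using 0 by (simp add: card_Un_disjoint mult_monom add.commute)
next
  case (Suc k)
  show ?case
  proof (cases "E = {}")
    case True
    have "finite V" using Suc unfolding simple_graph_def by auto
    then show ?thesis using True Suc by (simp add: card_Un_disjoint mult_monom add.commute)
  next
    case False
    have eu: "edge_u (V \<union> I, E) = edge_u (V, E)" unfolding edge_u_def by simp
    have ev: "edge_v (V \<union> I, E) = edge_v (V, E)" unfolding edge_v_def eu by simp
    let ?u = "edge_u (V, E)" and ?v = "edge_v (V, E)"
    have um: "?u \<in> V" using edge_u_mem[OF Suc.prems(1)] False by simp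
    obtain E2 where E2: "edge_local_comp (V, E) ?u ?v = (V, E2)"
      using elc_snd by metis
    have E2': "edge_local_comp (V \<union> I, E) ?u ?v = (V \<union> I, E2)"
      using elc_snd[of "V \<union> I" E ?u ?v V] E2 by simp
    have s2: "simple_graph (V, E2)" using simple_elc[OF Suc.prems(1)] E2 by metis
    have d1: "del_vertex (V \<union> I, E) ?u = (V - {?u} \<union> I, {e \<in> E. ?u \<notin> e})"
      using um Suc.prems unfolding del_vertex_def by auto
    have d2: "del_vertex (V \<union> I, E2) ?u = (V - {?u} \<union> I, {e \<in> E2. ?u \<notin> e})"
      using um Suc.prems unfolding del_vertex_def by auto
    have s1': "simple_graph (V - {?u}, {e \<in> E. ?u \<notin> e})"
      using simple_del[OF Suc.prems(1), of ?u] unfolding del_vertex_def by simp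
    have s2': "simple_graph (V - {?u}, {e \<in> E2. ?u \<notin> e})"
      using simple_del[OF s2, of ?u] unfolding del_vertex_def by simp
    have dj: "(V - {?u}) \<inter> I = {}" using Suc.prems by auto
    have "interlace_aux (Suc k) (V \<union> I, E) =
       interlace_aux k (V - {?u} \<union> I, {e \<in> E. ?u \<notin> e}) + interlace_aux k (V - {?u} \<union> I, {e \<in> E2. ?u \<notin> e})"
      using False by (simp add: eu ev E2' d1 d2)
    also have "\<dots> = monom 1 (card I) * (interlace_aux k (V - {?u}, {e \<in> E. ?u \<notin> e}) + interlace_aux k (V - {?u}, {e \<in> E2. ?u \<notin> e}))"
      using Suc.IH[OF s1' Suc.prems(2) dj] Suc.IH[OF s2' Suc.prems(2) dj] by (simp add: distrib_left)
    also have "\<dots> = monom 1 (card I) * interlace_aux (Suc k) (V, E)"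
      using False by (simp add: E2 del_vertex_def)
    finally show ?thesis .
  qed
qed

definition E0 :: "nat set set" where
  "E0 = {{0,8},{1,4},{1,8},{2,4},{3,4},{3,8},{4,7},{4,9},{5,8},{6,8}}"

lemma E0_simple: "simple_graph ({0..<10}, E0)"
  unfolding simple_graph_def E0_def by auto

lemma E0_simple_n: "10 \<le> n \<Longrightarrow> simple_graph ({0..<n}, E0)"
  using E0_simple unfolding simple_graph_def
  by (auto, meson atLeastLessThan_iff less_le_trans subsetD)

lemma E0_ic: "icC 10 ({0..<10}, E0) = [:0, 2, 7, 6, 7, 4, 3, 2, 1:]"
  unfolding E0_def by code_simp

lemma E0_poly: "interlace_poly ({0..<10}, E0) = [:0, 2, 7, 6, 7, 4, 3, 2, 1:]"
  unfolding interlace_poly_def using icC_eq[OF E0_simple, of 10] E0_ic by simp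

lemma E0_poly_n:
  assumes "10 \<le> n"
  shows "interlace_poly ({0..<n}, E0) = monom 1 (n - 10) * [:0, 2, 7, 6, 7, 4, 3, 2, 1:]"
proof -
  have u: "{0..<n} = {0..<10} \<union> {10..<n}" using assms by auto
  have "interlace_poly ({0..<n}, E0) = interlace_aux n ({0..<n}, E0)"
    unfolding interlace_poly_def by simp
  also have "\<dots> = interlace_aux n ({0..<10} \<union> {10..<n}, E0)"
    using u by (simp only:)
  also have "\<dots> = monom 1 (n - 10) * interlace_aux n ({0..<10}, E0)"
    using isolated[OF E0_simple, of "{10..<n}" n] by auto
  also have "interlace_aux n ({0..<10}, E0) = interlace_aux 10 ({0..<10}, E0)"
    using fuel[OF E0_simple, of n] assms by simp
  finally show ?thesis using E0_poly unfolding interlace_poly_def by simp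
qed

lemma not_unimodal: "\<not> unimodal_coeffs (monom 1 m * [:0, 2, 7, 6, 7, 4, 3, 2, 1:] :: int poly)"
proof
  let ?p = "[:0, 2, 7, 6, 7, 4, 3, 2, 1:] :: int poly"
  define q where "q = monom 1 m * ?p"
  have c: "\<And>j. coeff q (m + j) = coeff ?p j"
    unfolding q_def coeff_monom_mult by simp
  have dp: "degree ?p = 8" by simp
  have p0: "?p \<noteq> 0" by simp
  have m0: "monom 1 m \<noteq> (0::int poly)" by simp
  have "degree q = degree (monom (1::int) m) + degree ?p"
    unfolding q_def by (rule degree_mult_eq[OF m0 p0])
  then have d: "degree q = m + 8"
    unfolding dp by (simp add: degree_monom_eq)
  assume "unimodal_coeffs (monom 1 m * ?p)"
  then obtain k where
    up: "\<forall>i j. 1 \<le> i \<and> i \<le> j \<and> j \<le> k \<longrightarrow> coeff q i \<le> coeff q j" and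
    dn: "\<forall>i j. k \<le> i \<and> i \<le> j \<and> j \<le> degree q \<longrightarrow> coeff q i \<ge> coeff q j"
    unfolding unimodal_coeffs_def q_def by blast
  show False
  proof (cases "m + 3 \<le> k")
    case True
    then have "coeff q (m+2) \<le> coeff q (m+3)" using up by auto
    then show False unfolding c by (simp add: eval_nat_numeral)
  next
    case False
    then have "coeff q (m+3) \<ge> coeff q (m+4)" using dn d by auto
    then show False unfolding c by (simp add: eval_nat_numeral)
  qed
qed

theorem mainTheorem3:
  shows "(\<forall>n::nat. n \<ge> 10 \<longrightarrow>
            (\<exists>E. simple_graph ({0..<n}, E) \<and> \<not> unimodal_coeffs (interlace_poly ({0..<n}, E))))
       \<and> (\<exists>E. simple_graph ({0..<10}, E) \<and>
            interlace_poly ({0..<10}, E) = [:0, 2, 7, 6, 7, 4, 3, 2, 1:])"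
  using E0_simple_n E0_poly_n not_unimodal E0_simple E0_poly by metis

end
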